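(* Let $\mu$ be a finite Borel measure on $\mathbb{R}^d$ and suppose there exists a frame measure $\nu$ for $\mu$ with frame bounds $A,B>0$. Assume in addition that there exist a Borel set $F\subset\mathbb{R}^d$ with $\mu(F)>0$ and a vector $a\in\mathbb{R}^d$ such that $T_a(\mu|_{F+a})\ll\mu$. Then $$\frac{B}{A}\geq\left\|\frac{dT_a(\mu|_{F+a})}{d\mu}\right\|_{L^\infty(\mu)}.$$
   Context: For $t,x\in\mathbb{R}^d$ let $e_t(x)=e^{2\pi i t\cdot x}$. For a finite Borel measure $\mu$ and $f\in L^1(\mu)$, $\widehat{f\,d\mu}(t)=\int f(x)e^{-2\pi i t\cdot x}\,d\mu(x)$. A Borel measure $\nu$ on $\mathbb{R}^d$ is a frame measure for $\mu$ with frame bounds $A,B>0$ if $A\|f\|_{L^2(\mu)}^2\le \|\widehat{f\,d\mu}\|_{L^2(\nu)}^2\le B\|f\|_{L^2(\mu)}^2$ for all $f\in L^2(\mu)$; it is a tight frame measure if one can take $A=B$. For a Borel set $E$, $\mu|_E(G):=\mu(E\cap G)$; for $a\in\mathbb{R}^d$, $T_a\mu(G):=\mu(G+a)$ for Borel $G$ (so $\int f\,dT_a\mu=\int f(x-a)\,d\mu(x)$). $\frac{d\omega}{d\mu}$ denotes the Radon–Nikodym derivative and $\|\cdot\|_{L^\infty(\mu)}$ the $\mu$-essential supremum. *)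

theory Defs
  imports "HOL-Analysis.Analysis" "HOL-Probability.Essential_Supremum"
begin

definition fourier_meas :: "'a::euclidean_space measure \<Rightarrow> ('a \<Rightarrow> complex) \<Rightarrow> 'a \<Rightarrow> complex" where
  "fourier_meas \<mu> f t = (LINT x|\<mu>. f x * cis (- 2 * pi * (t \<bullet> x)))"

definition L2 :: "'a::euclidean_space measure \<Rightarrow> ('a \<Rightarrow> complex) set" where
  "L2 \<mu> = {f. f \<in> borel_measurable \<mu> \<and> integrable \<mu> (\<lambda>x. (cmod (f x))\<^sup>2)}"

definition L2_norm_sq :: "'a::euclidean_space measure \<Rightarrow> ('a \<Rightarrow> complex) \<Rightarrow> real" where
  "L2_norm_sq \<mu> f = (LINT x|\<mu>. (cmod (f x))\<^sup>2)"

text \<open>\<nu> is a frame measure for \<mu> with frame bounds A, B. The L^2(\<nu>) norm of the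
  Fourier transform is taken as an extended nonnegative integral (it may a priori be infinite).\<close>
definition frame_measure :: "'a::euclidean_space measure \<Rightarrow> 'a measure \<Rightarrow> real \<Rightarrow> real \<Rightarrow> bool" where
  "frame_measure \<mu> \<nu> A B \<longleftrightarrow> A > 0 \<and> B > 0 \<and>
     (\<forall>f \<in> L2 \<mu>.
        ennreal (A * L2_norm_sq \<mu> f) \<le> (\<integral>\<^sup>+ t. ennreal ((cmod (fourier_meas \<mu> f t))\<^sup>2) \<partial>\<nu>) \<and>
        (\<integral>\<^sup>+ t. ennreal ((cmod (fourier_meas \<mu> f t))\<^sup>2) \<partial>\<nu>) \<le> ennreal (B * L2_norm_sq \<mu> f))"

definition restr_measure :: "'a measure \<Rightarrow> 'a set \<Rightarrow> 'a measure" where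
  "restr_measure \<mu> E = density \<mu> (indicator E)"

text \<open>Translation T_a \<mu> (G) = \<mu>(G + a), i.e. the push-forward under x \<mapsto> x - a.\<close>
definition translate_measure :: "'a::euclidean_space \<Rightarrow> 'a measure \<Rightarrow> 'a measure" where
  "translate_measure a \<mu> = distr \<mu> borel (\<lambda>x. x - a)"

end

theory Submission
  imports Defs
begin

lemma tm_sets: "sets (translate_measure a \<mu>) = sets borel"
  by (simp add: translate_measure_def)

lemma transfer1:
  fixes \<psi> :: "'a::euclidean_space \<Rightarrow> 'b::{banach, second_countable_topology}"
  assumes "sets \<mu> = sets borel" "F' \<in> sets borel" "\<psi> \<in> borel_measurable borel"
  shows "integral\<^sup>L (translate_measure a (restr_measure \<mu> F')) \<psi> = (\<integral> x. indicator F' x *\<^sub>R \<psi> (x - a) \<partial>\<mu>)"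
proof -
  have m: "(\<lambda>x. x - a) \<in> measurable (density \<mu> (indicator F')) borel"
    using assms(1) by (simp add: measurable_cong_sets[OF assms(1) refl])
  have "integral\<^sup>L (translate_measure a (restr_measure \<mu> F')) \<psi>
      = integral\<^sup>L (density \<mu> (\<lambda>x. ennreal (indicator F' x))) (\<lambda>x. \<psi> (x - a))"
    unfolding translate_measure_def restr_measure_def ennreal_indicator
    by (rule integral_distr[OF m assms(3)])
  also have "\<dots> = (\<integral> x. indicator F' x *\<^sub>R \<psi> (x - a) \<partial>\<mu>)"
  proof (rule integral_density)
    show "(\<lambda>x. \<psi> (x - a)) \<in> borel_measurable \<mu>"
      using assms by (simp add: measurable_cong_sets[OF assms(1) refl])
    show "indicator F' \<in> borel_measurable \<mu>"
      using assms by (simp add: measurable_cong_sets[OF assms(1) refl])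
  qed auto
  finally show ?thesis .
qed

lemma transfer2:
  fixes \<psi> :: "'a::euclidean_space \<Rightarrow> 'b::{banach, second_countable_topology}"
  assumes "sets \<mu> = sets borel" "finite_measure \<mu>" "sets \<omega> = sets borel" "absolutely_continuous \<mu> \<omega>"
    "finite_measure \<omega>" "\<psi> \<in> borel_measurable borel"
  shows "integral\<^sup>L \<omega> \<psi> = (\<integral> x. enn2real (RN_deriv \<mu> \<omega> x) *\<^sub>R \<psi> x \<partial>\<mu>)"
proof -
  interpret finite_measure \<mu> by fact
  have se: "sets \<omega> = sets \<mu>" using assms by simp
  have fin: "AE x in \<mu>. RN_deriv \<mu> \<omega> x \<noteq> \<infinity>"
    by (rule RN_deriv_finite[OF _ assms(4) se]) (use assms(5) finite_measure_def in auto)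
  have "\<omega> = density \<mu> (RN_deriv \<mu> \<omega>)" using density_RN_deriv[OF assms(4) se] by simp
  also have "\<dots> = density \<mu> (\<lambda>x. ennreal (enn2real (RN_deriv \<mu> \<omega> x)))"
    by (rule density_cong) (use fin in \<open>auto simp: less_top\<close>)
  finally have "integral\<^sup>L \<omega> \<psi> = integral\<^sup>L (density \<mu> (\<lambda>x. ennreal (enn2real (RN_deriv \<mu> \<omega> x)))) \<psi>"
    by simp
  also have "\<dots> = (\<integral> x. enn2real (RN_deriv \<mu> \<omega> x) *\<^sub>R \<psi> x \<partial>\<mu>)"
    by (rule integral_density) (use assms in \<open>auto simp: measurable_cong_sets[OF assms(1) refl]\<close>)
  finally show ?thesis .
qed


theorem theorem2p2:
  fixes \<mu> \<nu> :: "'a::euclidean_space measure" and A B :: real and F :: "'a set" and a :: 'a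
  assumes "sets \<mu> = sets borel" and "finite_measure \<mu>"
    and "sets \<nu> = sets borel"
    and "frame_measure \<mu> \<nu> A B"
    and "F \<in> sets borel" and "emeasure \<mu> F > 0"
    and "absolutely_continuous \<mu> (translate_measure a (restr_measure \<mu> ((\<lambda>x. x + a) ` F)))"
  shows "ennreal (B / A) \<ge>
           esssup \<mu> (RN_deriv \<mu> (translate_measure a (restr_measure \<mu> ((\<lambda>x. x + a) ` F))))"
proof -
  interpret finite_measure \<mu> by fact
  define F' where "F' = (\<lambda>x. x + a) ` F"
  define \<omega> where "\<omega> = translate_measure a (restr_measure \<mu> F')"
  define g where "g = RN_deriv \<mu> \<omega>"
  define G where "G x = enn2real (g x)" for x
  have AB: "A > 0" "B > 0" using assms(4) unfolding frame_measure_def by auto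
  have spc: "space \<mu> = UNIV" using sets_eq_imp_space_eq[OF assms(1)] by simp
  have Mb: "borel_measurable \<mu> = borel_measurable borel"
    by (rule measurable_cong_sets[OF assms(1) refl])
  have F'_eq: "F' = (\<lambda>x. x - a) -` F"
    unfolding F'_def by (force simp: image_iff algebra_simps)
  have F'b: "F' \<in> sets borel"
    unfolding F'_eq using measurable_sets[of "\<lambda>x. x - a" borel borel F] assms(5) by simp
  have sets_\<omega>: "sets \<omega> = sets borel" by (simp add: \<omega>_def tm_sets)
  have ac: "absolutely_continuous \<mu> \<omega>" using assms(7) by (simp add: \<omega>_def F'_def)
  have fin_\<omega>: "finite_measure \<omega>"
  proof
    have "emeasure \<omega> (space \<omega>) = emeasure (density \<mu> (indicator F')) ((\<lambda>x. x - a) -` UNIV \<inter> space (density \<mu> (indicator F')))"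
      unfolding \<omega>_def translate_measure_def restr_measure_def
      by (subst emeasure_distr) (auto simp: Mb)
    also have "\<dots> = (\<integral>\<^sup>+ x. indicator F' x \<partial>\<mu>)"
      by (subst emeasure_density) (auto simp: Mb F'b spc assms(1) borel_measurable_indicator)
    also have "\<dots> = emeasure \<mu> F'" using F'b assms(1) by simp
    finally show "emeasure \<omega> (space \<omega>) \<noteq> \<infinity>" by simp
  qed
  have gm: "g \<in> borel_measurable borel" unfolding g_def Mb[symmetric] by simp
  have Gm[measurable]: "G \<in> borel_measurable borel" unfolding G_def[abs_def] using gm by measurable
  have gfin: "AE x in \<mu>. g x \<noteq> \<infinity>"
    unfolding g_def
    by (rule RN_deriv_finite[OF _ ac]) (use fin_\<omega> finite_measure_def sets_\<omega> assms(1) in auto)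
  have T1: "integral\<^sup>L \<omega> \<psi> = (\<integral> x. indicator F' x *\<^sub>R \<psi> (x - a) \<partial>\<mu>)"
    if "\<psi> \<in> borel_measurable borel" for \<psi> :: "'a \<Rightarrow> complex"
    unfolding \<omega>_def by (rule transfer1[OF assms(1) F'b that])
  have T2: "integral\<^sup>L \<omega> \<psi> = (\<integral> x. G x *\<^sub>R \<psi> x \<partial>\<mu>)"
    if "\<psi> \<in> borel_measurable borel" for \<psi> :: "'a \<Rightarrow> complex"
    unfolding G_def g_def by (rule transfer2[OF assms(1,2) sets_\<omega> ac fin_\<omega> that])
  have T1r: "integral\<^sup>L \<omega> \<psi> = (\<integral> x. indicator F' x *\<^sub>R \<psi> (x - a) \<partial>\<mu>)"
    if "\<psi> \<in> borel_measurable borel" for \<psi> :: "'a \<Rightarrow> real"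
    unfolding \<omega>_def by (rule transfer1[OF assms(1) F'b that])
  have T2r: "integral\<^sup>L \<omega> \<psi> = (\<integral> x. G x *\<^sub>R \<psi> x \<partial>\<mu>)"
    if "\<psi> \<in> borel_measurable borel" for \<psi> :: "'a \<Rightarrow> real"
    unfolding G_def g_def by (rule transfer2[OF assms(1,2) sets_\<omega> ac fin_\<omega> that])
  define E where "E n = {x. B / A + 1 / Suc n < G x \<and> G x \<le> real n}" for n :: nat
  have Eb: "E n \<in> sets borel" for n
    unfolding E_def using Gm by measurable
  have key: "emeasure \<mu> (E n) = 0" for n
  proof (rule ccontr)
    assume En0: "emeasure \<mu> (E n) \<noteq> 0"
    define c where "c = B / A + 1 / Suc n"
    have c0: "c > 0" unfolding c_def using AB by (simp add: add_pos_pos)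
    have Gnn: "G x \<ge> 0" for x unfolding G_def by simp
    define h1 where "h1 x = complex_of_real (indicator (E n) x * G x)" for x
    define h2 where "h2 x = complex_of_real (indicator F' x * indicator (E n) (x - a))" for x
    define \<psi> where "\<psi> t y = complex_of_real (indicator (E n) y) * cis (- 2 * pi * (t \<bullet> y))" for t y
    have Ebn[measurable]: "E n \<in> sets borel" by (rule Eb)
    have F'bm[measurable]: "F' \<in> sets borel" by (rule F'b)
    have cism[measurable]: "(\<lambda>x. cis (- 2 * pi * (t \<bullet> x))) \<in> borel_measurable borel" for t
      by (intro borel_measurable_continuous_onI continuous_intros)
    have \<psi>m: "\<psi> t \<in> borel_measurable borel" for t
      unfolding \<psi>_def[abs_def] by measurable
    have h1m: "h1 \<in> borel_measurable \<mu>" unfolding Mb h1_def[abs_def] by measurable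
    have h2m: "h2 \<in> borel_measurable \<mu>" unfolding Mb h2_def[abs_def] by measurable
    have fe: "cmod (fourier_meas \<mu> h1 t) = cmod (fourier_meas \<mu> h2 t)" for t
    proof -
      have "fourier_meas \<mu> h1 t = (\<integral> x. G x *\<^sub>R \<psi> t x \<partial>\<mu>)"
        unfolding fourier_meas_def h1_def \<psi>_def
        by (rule Bochner_Integration.integral_cong) (auto simp: scaleR_conv_of_real)
      also have "\<dots> = integral\<^sup>L \<omega> (\<psi> t)" using T2[OF \<psi>m] by simp
      also have "\<dots> = (\<integral> x. indicator F' x *\<^sub>R \<psi> t (x - a) \<partial>\<mu>)" using T1[OF \<psi>m] by simp
      also have "\<dots> = (\<integral> x. cis (2 * pi * (t \<bullet> a)) * (h2 x * cis (- 2 * pi * (t \<bullet> x))) \<partial>\<mu>)"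
      proof (rule Bochner_Integration.integral_cong)
        fix x
        have "cis (- 2 * pi * (t \<bullet> (x - a))) = cis (2 * pi * (t \<bullet> a)) * cis (- 2 * pi * (t \<bullet> x))"
          by (simp add: cis_mult inner_diff_right algebra_simps)
        then show "indicator F' x *\<^sub>R \<psi> t (x - a) = cis (2 * pi * (t \<bullet> a)) * (h2 x * cis (- 2 * pi * (t \<bullet> x)))"
          unfolding \<psi>_def h2_def by (simp add: scaleR_conv_of_real)
      qed simp
      also have "\<dots> = cis (2 * pi * (t \<bullet> a)) * fourier_meas \<mu> h2 t"
        unfolding fourier_meas_def by simp
      finally show ?thesis by (simp add: norm_mult)
    qed
    have iG: "integrable \<mu> (\<lambda>x. G x * indicator (E n) x)"
      by (rule integrable_const_bound[where B="real n"]) (auto simp: E_def indicator_def Mb Gnn)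
    have iG2: "integrable \<mu> (\<lambda>x. (indicator (E n) x * G x)\<^sup>2)"
      by (rule integrable_const_bound[where B="(real n)\<^sup>2"])
         (auto simp: E_def indicator_def Mb Gnn power_mono)
    have h1L: "h1 \<in> L2 \<mu>"
      unfolding L2_def using h1m
      by (auto intro!: integrable_const_bound[where B="(real n)\<^sup>2"] simp: h1_def E_def indicator_def Mb Gnn power_mono)
    have h2L: "h2 \<in> L2 \<mu>"
      unfolding L2_def using h2m
      by (auto intro!: integrable_const_bound[where B="1"] simp: h2_def indicator_def Mb)
    define Q where "Q = L2_norm_sq \<mu> h1"
    define J where "J = (\<integral> x. G x * indicator (E n) x \<partial>\<mu>)"
    have Qe: "Q = (\<integral> x. (indicator (E n) x * G x)\<^sup>2 \<partial>\<mu>)"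
      unfolding Q_def L2_norm_sq_def h1_def
      by (rule Bochner_Integration.integral_cong) (simp_all del: of_real_mult add: of_real_mult[symmetric] norm_of_real)
    have Je: "L2_norm_sq \<mu> h2 = J"
    proof -
      have "L2_norm_sq \<mu> h2 = (\<integral> x. indicator F' x *\<^sub>R indicator (E n) (x - a) \<partial>\<mu>)"
        unfolding L2_norm_sq_def h2_def
        by (rule Bochner_Integration.integral_cong) (auto simp: indicator_def)
      also have "\<dots> = integral\<^sup>L \<omega> (indicator (E n))" by (rule T1r[symmetric]) simp
      also have "\<dots> = J" unfolding J_def by (subst T2r) auto
      finally show ?thesis .
    qed
    have J0: "J \<ge> 0" unfolding J_def by (auto intro!: integral_nonneg_AE simp: Gnn)
    have fr1: "ennreal (A * Q) \<le> (\<integral>\<^sup>+ t. ennreal ((cmod (fourier_meas \<mu> h1 t))\<^sup>2) \<partial>\<nu>)"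
      using assms(4) h1L unfolding frame_measure_def Q_def by blast
    have fr2: "(\<integral>\<^sup>+ t. ennreal ((cmod (fourier_meas \<mu> h2 t))\<^sup>2) \<partial>\<nu>) \<le> ennreal (B * J)"
      using assms(4) h2L unfolding frame_measure_def Je[symmetric] by blast
    have "ennreal (A * Q) \<le> ennreal (B * J)" using fr1 fr2 fe by simp
    then have AQ: "A * Q \<le> B * J" using AB J0 by (simp add: ennreal_le_iff)
    have QJ: "c * J \<le> Q"
    proof -
      have "c * J = (\<integral> x. c * (G x * indicator (E n) x) \<partial>\<mu>)" unfolding J_def by simp
      also have "\<dots> \<le> Q" unfolding Qe
      proof (rule integral_mono)
        show "integrable \<mu> (\<lambda>x. c * (G x * indicator (E n) x))" using iG by simp
        show "integrable \<mu> (\<lambda>x. (indicator (E n) x * G x)\<^sup>2)" by (rule iG2)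
        fix x
        show "c * (G x * indicator (E n) x) \<le> (indicator (E n) x * G x)\<^sup>2"
        proof (cases "x \<in> E n")
          case True
          then have "c < G x" unfolding E_def c_def by simp
          then have "c * G x \<le> G x * G x" using Gnn[of x] by (simp add: mult_right_mono)
          then show ?thesis using True by (simp add: power2_eq_square)
        qed simp
      qed
      finally show ?thesis .
    qed
    have mE: "measure \<mu> (E n) > 0"
      using En0 emeasure_eq_measure[of "E n"] by (simp add: measure_nonneg zero_less_measure_iff)
    have "c * measure \<mu> (E n) = (\<integral> x. c * indicator (E n) x \<partial>\<mu>)"
      using Eb assms(1) by (simp add: integrable_indicator_iff less_top[symmetric])
    also have "\<dots> \<le> J" unfolding J_def
    proof (rule integral_mono)
      show "integrable \<mu> (\<lambda>x. c * indicator (E n) x)" using Eb assms(1) by (simp add: integrable_indicator_iff less_top[symmetric])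
      show "integrable \<mu> (\<lambda>x. G x * indicator (E n) x)" by (rule iG)
      fix x show "c * indicator (E n) x \<le> G x * indicator (E n) x"
        by (auto simp: indicator_def E_def c_def)
    qed
    finally have "J > 0" using mE c0 by (smt (verit) mult_pos_pos)
    have "A * c * J \<le> B * J" using AQ QJ AB by (smt (verit) mult_left_mono mult.assoc)
    then have "A * c \<le> B" using \<open>J > 0\<close> by simp
    then have "c \<le> B / A" using AB by (simp add: field_simps)
    then show False unfolding c_def by simp
  qed
  have "AE x in \<mu>. g x \<le> ennreal (B / A)"
  proof -
    have "AE x in \<mu>. x \<notin> E n" for n
      by (rule AE_I'[of "E n"]) (use key Eb assms(1) in auto)
    then have "AE x in \<mu>. \<forall>n. x \<notin> E n" by (simp add: AE_all_countable)
    with gfin show ?thesis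
    proof eventually_elim
      case (elim x)
      have gx: "g x = ennreal (G x)" using elim by (simp add: G_def less_top)
      have "G x \<le> B / A"
      proof (rule ccontr)
        assume "\<not> G x \<le> B / A"
        then have d: "G x - B / A > 0" by simp
        define n where "n = nat \<lceil>max (G x) (1 / (G x - B / A))\<rceil>"
        have n1: "G x \<le> real n" unfolding n_def by linarith
        have "1 / (G x - B / A) \<le> real n" unfolding n_def by linarith
        then have "1 / (G x - B / A) < real (Suc n)" by simp
        then have "1 / real (Suc n) < G x - B / A" using d
          by (simp add: divide_simps mult.commute split: if_splits)
        then have "x \<in> E n" unfolding E_def using n1 by simp
        with elim show False by blast
      qed
      then show ?case unfolding gx by (rule ennreal_leI)
    qed
  qed
  then show ?thesis
    unfolding F'_def[symmetric] \<omega>_def[symmetric] g_def[symmetric]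
    by (intro esssup_I) (simp add: Mb gm)
qed

end
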